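(* Let $G$ be a graph and $T$ a tree 3-spanner of $G$. Let $u,p,q$ be vertices of $G$ such that $u$ lies on the $p,q$-path of $T$ and $p,q\notin N_T[u]$. Then every $p,q$-path of $G$ contains a vertex of $N_T[u]$.
   Context: Graphs are finite, simple and loopless. $N_T[u]$ denotes the closed neighbourhood of $u$ in $T$, that is, $u$ together with its neighbours in $T$. A tree 3-spanner of $G$ is a spanning subgraph $T$ of $G$ that is a tree and satisfies $d_T(a,b)\le 3\,d_G(a,b)$ for all vertices $a,b$ of $G$. *)

theory Defs
  imports Main
begin

definition graph :: "'a set \<Rightarrow> ('a \<Rightarrow> 'a \<Rightarrow> bool) \<Rightarrow> bool" where
  "graph V E \<longleftrightarrow> finite V \<and> (\<forall>a b. E a b \<longrightarrow> a \<in> V \<and> b \<in> V)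
     \<and> (\<forall>a b. E a b \<longrightarrow> E b a) \<and> (\<forall>a. \<not> E a a)"

definition walk :: "('a \<Rightarrow> 'a \<Rightarrow> bool) \<Rightarrow> 'a list \<Rightarrow> bool" where
  "walk E xs \<longleftrightarrow> xs \<noteq> [] \<and> (\<forall>i. Suc i < length xs \<longrightarrow> E (xs ! i) (xs ! Suc i))"

definition is_path :: "('a \<Rightarrow> 'a \<Rightarrow> bool) \<Rightarrow> 'a \<Rightarrow> 'a \<Rightarrow> 'a list \<Rightarrow> bool" where
  "is_path E p q xs \<longleftrightarrow> walk E xs \<and> distinct xs \<and> hd xs = p \<and> last xs = q"

definition dist :: "('a \<Rightarrow> 'a \<Rightarrow> bool) \<Rightarrow> 'a \<Rightarrow> 'a \<Rightarrow> nat" where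
  "dist E a b = (LEAST n. \<exists>xs. walk E xs \<and> hd xs = a \<and> last xs = b \<and> length xs = Suc n)"

definition connected_on :: "'a set \<Rightarrow> ('a \<Rightarrow> 'a \<Rightarrow> bool) \<Rightarrow> bool" where
  "connected_on V E \<longleftrightarrow> (\<forall>a\<in>V. \<forall>b\<in>V. \<exists>xs. walk E xs \<and> hd xs = a \<and> last xs = b)"

text \<open>A cycle: closed walk x0 ... xk with k >= 3, x0 = xk, and x0..x(k-1) distinct.\<close>
definition is_cycle :: "('a \<Rightarrow> 'a \<Rightarrow> bool) \<Rightarrow> 'a list \<Rightarrow> bool" where
  "is_cycle E xs \<longleftrightarrow> walk E xs \<and> length xs \<ge> 4 \<and> hd xs = last xs \<and> distinct (butlast xs)"

definition tree :: "'a set \<Rightarrow> ('a \<Rightarrow> 'a \<Rightarrow> bool) \<Rightarrow> bool" where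
  "tree V E \<longleftrightarrow> graph V E \<and> V \<noteq> {} \<and> connected_on V E \<and> (\<nexists>xs. is_cycle E xs)"

definition tree_3_spanner :: "'a set \<Rightarrow> ('a \<Rightarrow> 'a \<Rightarrow> bool) \<Rightarrow> ('a \<Rightarrow> 'a \<Rightarrow> bool) \<Rightarrow> bool" where
  "tree_3_spanner V E T \<longleftrightarrow> (\<forall>a b. T a b \<longrightarrow> E a b) \<and> tree V T
     \<and> (\<forall>a\<in>V. \<forall>b\<in>V. dist T a b \<le> 3 * dist E a b)"

definition closed_nbhd :: "('a \<Rightarrow> 'a \<Rightarrow> bool) \<Rightarrow> 'a \<Rightarrow> 'a set" where
  "closed_nbhd T u = insert u {v. T u v}"

end

theory Submission
  imports Defs
begin

lemma walk_succ: "walk E xs \<longleftrightarrow> xs \<noteq> [] \<and> successively E xs"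
  unfolding walk_def successively_conv_nth by blast

lemma succ_join:
  assumes "successively T xs" "successively T ys" "xs \<noteq> []" "ys \<noteq> []" "last xs = hd ys"
  shows "successively T (xs @ tl ys)"
proof (cases "tl ys = []")
  case True then show ?thesis using assms(1) by simp
next
  case False
  have ys: "ys = hd ys # tl ys" using assms(4) by simp
  have "successively T (hd ys # tl ys)" using assms(2) ys by simp
  then have 1: "T (hd ys) (hd (tl ys))" and 2: "successively T (tl ys)"
    using False by (simp_all only: successively_Cons) blast+
  show ?thesis unfolding successively_append_iff using assms(1,5) 1 2 by simp
qed

lemma join_hd_last:
  assumes "xs \<noteq> []" "ys \<noteq> []" "last xs = hd ys"
  shows "hd (xs @ tl ys) = hd xs" "last (xs @ tl ys) = last ys" "xs @ tl ys \<noteq> []"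
    "set (xs @ tl ys) \<subseteq> set xs \<union> set ys"
proof -
  have ys: "ys = hd ys # tl ys" using assms by simp
  show "hd (xs @ tl ys) = hd xs" "xs @ tl ys \<noteq> []" using assms by auto
  show "set (xs @ tl ys) \<subseteq> set xs \<union> set ys" using ys by (metis Un_mono order_refl set_append set_subset_Cons)
  show "last (xs @ tl ys) = last ys"
  proof (cases "tl ys = []")
    case True then show ?thesis using assms ys by (metis append_Nil2 last.simps)
  next
    case False then show ?thesis using ys by (metis last_ConsR last_appendR)
  qed
qed

lemma shorten:
  "successively T xs \<Longrightarrow> xs \<noteq> [] \<Longrightarrow> \<exists>ys. successively T ys \<and> distinct ys \<and> ys \<noteq> []
     \<and> hd ys = hd xs \<and> last ys = last xs \<and> set ys \<subseteq> set xs"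
proof (induction xs rule: length_induct)
  case (1 xs)
  show ?case
  proof (cases "distinct xs")
    case True then show ?thesis using 1 by blast
  next
    case False
    then obtain as x bs cs where xs: "xs = as @ [x] @ bs @ [x] @ cs"
      using not_distinct_decomp by blast
    let ?zs = "as @ [x] @ cs"
    have s1: "successively T as" "successively T ((x#bs) @ (x#cs))"
      "as = [] \<or> T (last as) x"
      using "1.prems" unfolding xs by (auto simp: successively_append_iff)
    then have "successively T (x#cs)" by (simp only: successively_append_iff)
    then have s: "successively T ?zs" using s1
      by (auto simp: successively_append_iff)
    have l: "length ?zs < length xs" unfolding xs by simp
    have h: "hd ?zs = hd xs" "last ?zs = last xs" "set ?zs \<subseteq> set xs" unfolding xs
      by (auto simp: hd_append)
    from "1.IH" l s obtain ys where "successively T ys \<and> distinct ys \<and> ys \<noteq> []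
     \<and> hd ys = hd ?zs \<and> last ys = last ?zs \<and> set ys \<subseteq> set ?zs" by blast
    then show ?thesis using h by (intro exI[of _ ys]) auto
  qed
qed

lemma crossing:
  "successively R xs \<Longrightarrow> xs \<noteq> [] \<Longrightarrow> hd xs \<in> S \<Longrightarrow> last xs \<notin> S \<Longrightarrow>
   \<exists>x y. R x y \<and> x \<in> S \<and> y \<notin> S \<and> x \<in> set xs \<and> y \<in> set xs"
proof (induction xs)
  case Nil then show ?case by simp
next
  case (Cons a xs)
  show ?case
  proof (cases "xs = []")
    case True then show ?thesis using Cons by simp
  next
    case False
    then have r: "R a (hd xs)" "successively R xs" using Cons.prems
      by (auto simp: successively_Cons)
    show ?thesis
    proof (cases "hd xs \<in> S")
      case True
      then show ?thesis using Cons.IH[OF r(2) False] Cons.prems False by auto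
    next
      case f: False
      then show ?thesis using r Cons.prems False by (intro exI[of _ a] exI[of _ "hd xs"]) auto
    qed
  qed
qed

lemma small:
  assumes "successively T w" "w \<noteq> []" "hd w = x" "last w = y" "length w \<le> 4" "u \<in> set w"
    "u \<noteq> x" "u \<noteq> y" "\<not> T u x" "\<not> T u y" "\<And>a b. T a b \<Longrightarrow> T b a"
  shows False
proof -
  obtain a r where w: "w = a # r" using assms(2) by (cases w) auto
  show False
  proof (cases r)
    case Nil then show ?thesis using assms w by simp
  next
    case (Cons b r2)
    show ?thesis
    proof (cases r2)
      case Nil then show ?thesis using assms w Cons by auto
    next
      case c2: (Cons c r3)
      show ?thesis
      proof (cases r3)
        case Nil then show ?thesis using assms w Cons c2 by auto
      next
        case c3: (Cons d r4)
        then have "r4 = []" using assms(5) w Cons c2 by simp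
        then show ?thesis using assms w Cons c2 c3 by auto
      qed
    qed
  qed
qed
lemma succ_rev: "(\<And>a b. T a b \<Longrightarrow> T b a) \<Longrightarrow> successively T xs \<Longrightarrow> successively T (rev xs)"
  by (induction xs) (auto simp: successively_append_iff successively_Cons last_rev)

theorem lemma1:
  fixes V :: "'a set" and E T :: "'a \<Rightarrow> 'a \<Rightarrow> bool" and u p q :: 'a and P :: "'a list"
  assumes "graph V E"
    and "tree_3_spanner V E T"
    and "u \<in> V" "p \<in> V" "q \<in> V"
    and "is_path T p q P" and "u \<in> set P"
    and "p \<notin> closed_nbhd T u" and "q \<notin> closed_nbhd T u"
  shows "\<forall>Q. is_path E p q Q \<longrightarrow> set Q \<inter> closed_nbhd T u \<noteq> {}"
proof (intro allI impI)
  fix Q assume Q: "is_path E p q Q"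
  have tr: "tree V T" and sub: "\<And>a b. T a b \<Longrightarrow> E a b"
    and sp: "\<And>a b. a \<in> V \<Longrightarrow> b \<in> V \<Longrightarrow> dist T a b \<le> 3 * dist E a b"
    using assms(2) unfolding tree_3_spanner_def by auto
  have gT: "graph V T" and conn: "connected_on V T" and acyc: "\<nexists>xs. is_cycle T xs"
    using tr unfolding tree_def by auto
  have symT: "\<And>a b. T a b \<Longrightarrow> T b a" using gT unfolding graph_def by auto
  have symT': "(\<lambda>x y. T y x) = T" using symT by (intro ext) blast
  have EV: "\<And>a b. E a b \<Longrightarrow> a \<in> V \<and> b \<in> V" using assms(1) unfolding graph_def by auto
  have pu: "p \<noteq> u" and qu: "q \<noteq> u" using assms(8,9) unfolding closed_nbhd_def by auto
  have Pw: "P \<noteq> []" "successively T P" "distinct P" "hd P = p" "last P = q"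
    using assms(6) unfolding is_path_def walk_succ by auto
  obtain ys zs where P: "P = ys @ u # zs" using assms(7) split_list by metis
  have ys: "ys \<noteq> []" using Pw(4) pu P by auto
  have zs: "zs \<noteq> []" using Pw(5) qu P by auto
  have uys: "u \<notin> set ys" and uzs: "u \<notin> set zs" and dj: "set ys \<inter> set zs = {}"
    using Pw(3) P ys zs by auto
  have ab: "last ys \<noteq> hd zs" using dj ys zs last_in_set hd_in_set by fastforce
  have sys: "successively T ys" and szs: "successively T zs"
    and Ta: "T (last ys) u" and Tb: "T u (hd zs)"
    using Pw(2) ys zs unfolding P by (auto simp: successively_append_iff successively_Cons)
  have hys: "hd ys = p" using Pw(4) ys P by simp
  have lzs: "last zs = q" using Pw(5) zs P by simp
  define S where "S = {v. \<exists>w. w \<noteq> [] \<and> successively T w \<and> hd w = p \<and> last w = v \<and> u \<notin> set w}"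
  have pS: "p \<in> S" unfolding S_def using pu by (intro CollectI exI[of _ "[p]"]) auto
  have qS: "q \<notin> S"
  proof
    assume "q \<in> S"
    then obtain w where w: "w \<noteq> []" "successively T w" "hd w = p" "last w = q" "u \<notin> set w"
      unfolding S_def by blast
    define W1 where "W1 = rev ys @ tl w"
    have rys: "successively T (rev ys)" by (rule succ_rev[OF symT sys])
    have e1: "last (rev ys) = hd w" using ys w by (simp add: last_rev hys)
    have W1: "W1 \<noteq> []" "successively T W1" "hd W1 = last ys" "last W1 = q" "u \<notin> set W1"
      using succ_join[OF rys w(2) _ w(1) e1] join_hd_last[OF _ w(1) e1] ys w uys
      unfolding W1_def by (auto simp: hd_rev)
    define W2 where "W2 = W1 @ tl (rev zs)"
    have rzs: "successively T (rev zs)" by (rule succ_rev[OF symT szs])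
    have e2: "last W1 = hd (rev zs)" using zs W1 by (simp add: hd_rev lzs)
    have W2: "W2 \<noteq> []" "successively T W2" "hd W2 = last ys" "last W2 = hd zs" "u \<notin> set W2"
      using succ_join[OF W1(2) rzs W1(1) _ e2] join_hd_last[OF W1(1) _ e2] zs W1 uzs
      unfolding W2_def by (auto simp: last_rev)
    obtain D where D: "successively T D" "distinct D" "D \<noteq> []" "hd D = last ys"
      "last D = hd zs" "set D \<subseteq> set W2"
      using shorten[OF W2(2,1)] W2 by auto
    have uD: "u \<notin> set D" using D(6) W2(5) by auto
    have lD: "length D \<ge> 2"
    proof (rule ccontr)
      assume "\<not> 2 \<le> length D"
      then obtain c where "D = [c]" using D(3) by (cases D) (auto simp: not_le)
      then show False using D ab by simp
    qed
    have "is_cycle T (u # D @ [u])"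
      unfolding is_cycle_def walk_succ using D uD lD Ta Tb symT
      by (auto simp: successively_append_iff successively_Cons butlast_append)
    then show False using acyc by blast
  qed
  show "set Q \<inter> closed_nbhd T u \<noteq> {}"
  proof
    assume dis: "set Q \<inter> closed_nbhd T u = {}"
    have Qw: "Q \<noteq> []" "successively E Q" "hd Q = p" "last Q = q"
      using Q unfolding is_path_def walk_succ by auto
    obtain x y where xy: "E x y" "x \<in> S" "y \<notin> S" "x \<in> set Q" "y \<in> set Q"
      using crossing[OF Qw(2,1)] Qw pS qS by metis
    have xN: "x \<noteq> u" "\<not> T u x" and yN: "y \<noteq> u" "\<not> T u y"
      using dis xy unfolding closed_nbhd_def by auto
    have xV: "x \<in> V" and yV: "y \<in> V" using EV xy(1) by auto
    have "dist E x y \<le> 1" unfolding dist_def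
      by (rule Least_le) (rule exI[of _ "[x,y]"], simp add: walk_def xy(1))
    then have d3: "dist T x y \<le> 3" using sp[OF xV yV] by simp
    obtain w0 where "walk T w0 \<and> hd w0 = x \<and> last w0 = y"
      using conn xV yV unfolding connected_on_def by blast
    then have "\<exists>n xs. walk T xs \<and> hd xs = x \<and> last xs = y \<and> length xs = Suc n"
      by (intro exI[of _ "length w0 - 1"] exI[of _ w0]) (auto simp: walk_def)
    then have "\<exists>xs. walk T xs \<and> hd xs = x \<and> last xs = y \<and> length xs = Suc (dist T x y)"
      unfolding dist_def by (rule LeastI_ex)
    then obtain wxy where wxy: "walk T wxy" "hd wxy = x" "last wxy = y"
      "length wxy = Suc (dist T x y)" by blast
    have wx: "wxy \<noteq> []" "successively T wxy" using wxy(1) unfolding walk_succ by auto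
    obtain wx0 where wx0: "wx0 \<noteq> []" "successively T wx0" "hd wx0 = p" "last wx0 = x" "u \<notin> set wx0"
      using xy(2) unfolding S_def by blast
    show False
    proof (cases "u \<in> set wxy")
      case True
      have "length wxy \<le> 4" using wxy(4) d3 by simp
      then show False using small[OF wx(2,1) wxy(2,3) _ True xN(1)[symmetric] yN(1)[symmetric] xN(2) yN(2) symT]
        by blast
    next
      case False
      have e3: "last wx0 = hd wxy" using wx0 wxy by simp
      have J: "successively T (wx0 @ tl wxy)" by (rule succ_join[OF wx0(2) wx(2) wx0(1) wx(1) e3])
      note K = join_hd_last[OF wx0(1) wx(1) e3]
      have "u \<notin> set (wx0 @ tl wxy)" using K(4) wx0(5) False by blast
      then have "y \<in> S" unfolding S_def
        using J K wx0(3) wxy(3) by (intro CollectI exI[of _ "wx0 @ tl wxy"]) simp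
      then show False using xy(3) by simp
    qed
  qed
qed

end
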